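(* Let $m\ge2$ be an integer. Every element $q$ of $\mathbb{Q}_m$ can be represented as $q=\sum_{k=0}^\infty \left(\frac{m}{m+1}\right)^k s_k$ (convergence in $\mathbb{Q}_m$) for a unique sequence $\{s_k\}_{k\ge0}$ with each $s_k\in\{0,1,\dots,m-1\}$.
   Context: $D_m$ is the set of rationals $a/b$ (with $a,b$ coprime integers) such that $\gcd(b,m)=1$; it is a subring of $\mathbb{Q}$ containing $\frac{m}{m+1}$. For $a/b\in D_m$ in lowest terms, $|a/b|_m=m^{-k}$ where $k$ is the largest integer with $m^k\mid a$, and $|0|_m=0$; the metric is $d(u,v)=|u-v|_m$, making $D_m$ a topological ring. $\mathbb{Q}_m$ is the Cauchy completion of $(D_m,d)$, with ring operations and the norm extended by continuity; $D_m$ is identified with its image in $\mathbb{Q}_m$. *)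

theory Defs
  imports Complex_Main
begin

definition Dm :: "nat \<Rightarrow> rat set" where
  "Dm m = {r. coprime (snd (quotient_of r)) (int m)}"

definition mnorm :: "nat \<Rightarrow> rat \<Rightarrow> real" where
  "mnorm m r = (if r = 0 then 0
     else 1 / real m ^ (GREATEST k. (int m) ^ k dvd fst (quotient_of r)))"

definition mcauchy :: "nat \<Rightarrow> (nat \<Rightarrow> rat) \<Rightarrow> bool" where
  "mcauchy m X \<longleftrightarrow> (\<forall>n. X n \<in> Dm m) \<and>
     (\<forall>e>0. \<exists>N. \<forall>i\<ge>N. \<forall>j\<ge>N. mnorm m (X i - X j) < e)"

definition Qm_class :: "nat \<Rightarrow> (nat \<Rightarrow> rat) \<Rightarrow> (nat \<Rightarrow> rat) set" where
  "Qm_class m X = {Y. mcauchy m Y \<and> (\<lambda>n. mnorm m (X n - Y n)) \<longlonglongrightarrow> 0}"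

definition Qm :: "nat \<Rightarrow> (nat \<Rightarrow> rat) set set" where
  "Qm m = Qm_class m ` {X. mcauchy m X}"

definition Qm_of :: "nat \<Rightarrow> rat \<Rightarrow> (nat \<Rightarrow> rat) set" where
  "Qm_of m r = Qm_class m (\<lambda>_. r)"

definition Qm_dist :: "nat \<Rightarrow> (nat \<Rightarrow> rat) set \<Rightarrow> (nat \<Rightarrow> rat) set \<Rightarrow> real" where
  "Qm_dist m a b = lim (\<lambda>n. mnorm m ((SOME X. X \<in> a) n - (SOME Y. Y \<in> b) n))"

end

theory Submission
  imports Defs
begin


definition mdvd :: "nat \<Rightarrow> nat \<Rightarrow> rat \<Rightarrow> bool" where
  "mdvd m k x \<longleftrightarrow> (\<exists>a b. b > 0 \<and> coprime b (int m) \<and> x = of_int a / of_int b \<and> (int m)^k dvd a)"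

lemma mdvd_mono: "mdvd m k x \<Longrightarrow> j \<le> k \<Longrightarrow> mdvd m j x"
  unfolding mdvd_def using le_imp_power_dvd dvd_trans by blast

lemma mdvd_add: "mdvd m k x \<Longrightarrow> mdvd m k y \<Longrightarrow> mdvd m k (x + y)"
proof -
  assume "mdvd m k x" "mdvd m k y"
  then obtain a b c d where h: "b > 0" "coprime b (int m)" "x = of_int a / of_int b" "(int m)^k dvd a"
     "d > 0" "coprime d (int m)" "y = of_int c / of_int d" "(int m)^k dvd c"
    unfolding mdvd_def by blast
  have "x + y = of_int (a*d + c*b) / of_int (b*d)" using h by (simp add: add_frac_eq)
  moreover have "coprime (b*d) (int m)" using h by simp
  moreover have "(int m)^k dvd a*d + c*b" using h by simp
  moreover have "b*d > 0" using h by simp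
  ultimately show ?thesis unfolding mdvd_def by blast
qed

lemma mdvd_mult: "mdvd m j x \<Longrightarrow> mdvd m l y \<Longrightarrow> mdvd m (j+l) (x * y)"
proof -
  assume "mdvd m j x" "mdvd m l y"
  then obtain a b c d where h: "b > 0" "coprime b (int m)" "x = of_int a / of_int b" "(int m)^j dvd a"
     "d > 0" "coprime d (int m)" "y = of_int c / of_int d" "(int m)^l dvd c"
    unfolding mdvd_def by blast
  have "x * y = of_int (a*c) / of_int (b*d)" using h by simp
  moreover have "coprime (b*d) (int m)" using h by simp
  moreover have "(int m)^(j+l) dvd a*c" using h by (simp add: power_add mult_dvd_mono)
  moreover have "b*d > 0" using h by simp
  ultimately show ?thesis unfolding mdvd_def by blast
qed

lemma mdvd_int_iff: "mdvd m k (of_int c) \<longleftrightarrow> (int m)^k dvd c"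
proof
  assume "mdvd m k (of_int c)"
  then obtain a b where h: "b > 0" "coprime b (int m)" "(of_int c::rat) = of_int a / of_int b" "(int m)^k dvd a"
    unfolding mdvd_def by blast
  have "c * b = a" using h
    by (metis (mono_tags, opaque_lifting) divide_eq_eq of_int_eq_0_iff of_int_eq_iff of_int_mult less_irrefl)
  then have "(int m)^k dvd c * b" using h by simp
  moreover have "coprime ((int m)^k) b" using h by (simp add: coprime_commute)
  ultimately show "(int m)^k dvd c" using coprime_dvd_mult_left_iff by blast
next
  assume "(int m)^k dvd c"
  then show "mdvd m k (of_int c)" unfolding mdvd_def
    by (rule_tac x=c in exI, rule_tac x=1 in exI) simp
qed

lemma mdvd_nat: "mdvd m 0 (of_nat c)"
  using mdvd_int_iff[of m 0 "int c"] by simp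

lemma mdvd_neg: "mdvd m k x \<Longrightarrow> mdvd m k (- x)"
  using mdvd_mult[of m 0 "-1" k x] mdvd_int_iff[of m 0 "-1"] by simp

lemma mdvd_diff: "mdvd m k x \<Longrightarrow> mdvd m k y \<Longrightarrow> mdvd m k (x - y)"
  using mdvd_add[of m k x "-y"] mdvd_neg by simp

lemma mdvd_zero: "mdvd m k 0"
  using mdvd_int_iff[of m k 0] by simp

lemma mdvd_sum: "finite A \<Longrightarrow> (\<And>i. i \<in> A \<Longrightarrow> mdvd m k (f i)) \<Longrightarrow> mdvd m k (\<Sum>i\<in>A. f i)"
  by (induction A rule: finite_induct) (auto intro: mdvd_add mdvd_zero)

lemma mdvd_inv_pow: "mdvd m 0 (1 / (of_nat m + 1)^n)"
  unfolding mdvd_def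
  by (rule_tac x=1 in exI, rule_tac x="(int m + 1)^n" in exI) simp

lemma mdvd_div_m: assumes "m \<ge> 2" "mdvd m (Suc k) x" shows "mdvd m k (x / of_nat m)"
proof -
  obtain a b where h: "b > 0" "coprime b (int m)" "x = of_int a / of_int b" "(int m)^(Suc k) dvd a"
    using assms unfolding mdvd_def by blast
  then obtain e where e: "a = (int m)^(Suc k) * e" by blast
  have "x / of_nat m = of_int ((int m)^k * e) / of_int b" using h e assms by (simp add: field_simps)
  then show ?thesis unfolding mdvd_def using h by (rule_tac x="(int m)^k * e" in exI) auto
qed

lemma mdvd_rpow: "mdvd m k ((of_nat m / (of_nat m + 1))^k)"
proof -
  have "(of_nat m / (of_nat m + 1) :: rat)^k = of_int ((int m)^k) * (1 / (of_nat m + 1)^k)"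
    by (simp add: power_divide)
  then show ?thesis using mdvd_mult[OF iffD2[OF mdvd_int_iff, of m k "(int m)^k"] mdvd_inv_pow[of m k]] by simp
qed



lemma qrep:
  assumes "b > 0" "x = of_int a / of_int b" "quotient_of x = (a', b')"
  shows "\<exists>c. c > 0 \<and> b = b' * c \<and> a = a' * c"
proof -
  have b': "b' > 0" using quotient_of_denom_pos[OF assms(3)] .
  have cp: "coprime a' b'" using quotient_of_coprime[OF assms(3)] .
  have "x = of_int a' / of_int b'" using quotient_of_div[OF assms(3)] .
  then have "(of_int a / of_int b :: rat) = of_int a' / of_int b'" using assms by simp
  then have "(of_int (a * b') :: rat) = of_int (a' * b)" using assms b' by (simp add: frac_eq_eq)
  then have eq: "a * b' = a' * b" by (simp only: of_int_eq_iff)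
  then have "b' dvd a' * b" by (metis dvd_triv_right)
  then have "b' dvd b" using cp by (metis coprime_commute coprime_dvd_mult_left_iff coprime_dvd_mult_right_iff)
  then obtain c where c: "b = b' * c" by blast
  have "c > 0" using c b' assms(1) by (simp add: zero_less_mult_iff)
  moreover have "a = a' * c"
  proof -
    have "b' * a = b' * (a' * c)" using eq c by (simp add: algebra_simps)
    then show ?thesis using b' by simp
  qed
  ultimately show ?thesis using c by blast
qed

lemma Dm_iff: "x \<in> Dm m \<longleftrightarrow> mdvd m 0 x"
proof
  assume "x \<in> Dm m"
  obtain a b where q: "quotient_of x = (a,b)" by (cases "quotient_of x") auto
  then show "mdvd m 0 x" using \<open>x \<in> Dm m\<close> unfolding mdvd_def Dm_def
    using quotient_of_div[OF q] quotient_of_denom_pos[OF q] by auto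
next
  assume "mdvd m 0 x"
  then obtain a b where h: "b > 0" "coprime b (int m)" "x = of_int a / of_int b"
    unfolding mdvd_def by blast
  obtain a' b' where q: "quotient_of x = (a',b')" by (cases "quotient_of x") auto
  obtain c where "b = b' * c" using qrep[OF h(1) h(3) q] by blast
  then have "coprime b' (int m)" using h(2) by simp
  then show "x \<in> Dm m" unfolding Dm_def using q by simp
qed

lemma mdvd_num_iff:
  assumes "quotient_of x = (a', b')"
  shows "mdvd m k x \<longleftrightarrow> x \<in> Dm m \<and> (int m)^k dvd a'"
proof
  assume md: "mdvd m k x"
  then obtain a b where h: "b > 0" "coprime b (int m)" "x = of_int a / of_int b" "(int m)^k dvd a"
    unfolding mdvd_def by blast
  obtain c where c: "c > 0" "b = b' * c" "a = a' * c" using qrep[OF h(1) h(3) assms] by blast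
  have "coprime c (int m)" using h(2) c by simp
  then have "coprime ((int m)^k) c" by (simp add: coprime_commute)
  then have "(int m)^k dvd a'" using h(4) c(3) coprime_dvd_mult_left_iff by blast
  moreover have "x \<in> Dm m" using md Dm_iff mdvd_mono by blast
  ultimately show "x \<in> Dm m \<and> (int m)^k dvd a'" by blast
next
  assume "x \<in> Dm m \<and> (int m)^k dvd a'"
  then show "mdvd m k x" unfolding mdvd_def Dm_def using assms quotient_of_div[OF assms] quotient_of_denom_pos[OF assms]
    by auto
qed

lemma inv_pow_anti: "m \<ge> 2 \<Longrightarrow> i \<le> j \<Longrightarrow> 1 / real m ^ j \<le> 1 / real m ^ i"
  by (intro divide_left_mono power_increasing) auto

lemma inv_pow_le_iff: assumes "m \<ge> 2" shows "1 / real m ^ j \<le> 1 / real m ^ i \<longleftrightarrow> i \<le> j"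
proof
  assume h: "1 / real m ^ j \<le> 1 / real m ^ i"
  show "i \<le> j"
  proof (rule ccontr)
    assume "\<not> i \<le> j"
    then have "real m ^ j < real m ^ i" using assms by (intro power_strict_increasing) auto
    then have "1 / real m ^ i < 1 / real m ^ j" using assms by (intro divide_strict_left_mono) auto
    then show False using h by simp
  qed
qed (rule inv_pow_anti[OF assms])

lemma mnorm_le_iff:
  assumes m: "m \<ge> 2" and x: "x \<in> Dm m"
  shows "mnorm m x \<le> 1 / real m ^ k \<longleftrightarrow> mdvd m k x"
proof (cases "x = 0")
  case True
  then show ?thesis by (simp add: mnorm_def mdvd_zero)
next
  case False
  obtain a b where q: "quotient_of x = (a,b)" by (cases "quotient_of x") auto
  have a0: "a \<noteq> 0" using False quotient_of_div[OF q] by auto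
  define P where "P = (\<lambda>k. (int m)^k dvd a)"
  have bound: "\<And>y. P y \<Longrightarrow> y \<le> nat \<bar>a\<bar>"
  proof -
    fix y assume "P y"
    then have "\<bar>(int m)^y\<bar> \<le> \<bar>a\<bar>" using a0 P_def dvd_imp_le_int by blast
    moreover have "int y < 2^y" proof - have "y < 2^y" by (rule less_exp) then have "int y < int (2^y)" by (simp only: of_nat_less_iff) then show ?thesis by simp qed
    moreover have "(2::int)^y \<le> (int m)^y" using m by (intro power_mono) auto
    ultimately have "int y \<le> \<bar>a\<bar>" by linarith
    then show "y \<le> nat \<bar>a\<bar>" by linarith
  qed
  have G: "mnorm m x = 1 / real m ^ (Greatest P)" using False q unfolding mnorm_def P_def by simp
  have "P 0" unfolding P_def by simp
  have PG: "P (Greatest P)" using GreatestI_nat[of P 0 "nat \<bar>a\<bar>", OF \<open>P 0\<close> bound] .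
  have "1 / real m ^ (Greatest P) \<le> 1 / real m ^ k \<longleftrightarrow> k \<le> Greatest P"
    by (rule inv_pow_le_iff[OF m])
  also have "\<dots> \<longleftrightarrow> P k"
  proof
    assume "k \<le> Greatest P" then show "P k" using PG unfolding P_def using le_imp_power_dvd dvd_trans by blast
  next
    assume "P k" then show "k \<le> Greatest P" using Greatest_le_nat[of P k "nat \<bar>a\<bar>", OF _ bound] by blast
  qed
  also have "\<dots> \<longleftrightarrow> mdvd m k x" using mdvd_num_iff[OF q] x P_def by blast
  finally show ?thesis using G by simp
qed

lemma mnorm_nonneg: "mnorm m x \<ge> 0"
  unfolding mnorm_def by simp

lemma mnorm_zero[simp]: "mnorm m 0 = 0"
  unfolding mnorm_def by simp

lemma mnorm_cases: "mnorm m x = 0 \<or> (\<exists>i. mnorm m x = 1 / real m ^ i)"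
  unfolding mnorm_def by auto

lemma mnorm_eq0: assumes "m \<ge> 2" shows "mnorm m x = 0 \<longleftrightarrow> x = 0"
  using assms unfolding mnorm_def by auto

lemma mnorm_neg: "mnorm m (- x) = mnorm m x"
proof -
  obtain a b where q: "quotient_of x = (a,b)" by (cases "quotient_of x") auto
  have "quotient_of (-x) = (-a, b)" using q by (simp add: rat_uminus_code)
  then show ?thesis using q unfolding mnorm_def by simp
qed


lemma mnorm_ultra:
  assumes m: "m \<ge> 2" and x: "x \<in> Dm m" and y: "y \<in> Dm m"
  shows "mnorm m (x + y) \<le> max (mnorm m x) (mnorm m y)"
proof (cases "x = 0 \<or> y = 0")
  case True then show ?thesis by auto
next
  case False
  then obtain i j where ij: "mnorm m x = 1 / real m ^ i" "mnorm m y = 1 / real m ^ j"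
    using mnorm_cases[of m x] mnorm_cases[of m y] mnorm_eq0[OF m] by metis
  define g where "g = min i j"
  have mx: "max (mnorm m x) (mnorm m y) = 1 / real m ^ g"
    using m ij inv_pow_anti[OF m, of i j] inv_pow_anti[OF m, of j i] unfolding g_def by (cases "i \<le> j") (auto simp: max_def min_def)
  have "mnorm m x \<le> 1 / real m ^ g" "mnorm m y \<le> 1 / real m ^ g" using mx by auto
  then have "mdvd m g x" "mdvd m g y" using mnorm_le_iff[OF m] x y by auto
  then have "mdvd m g (x + y)" by (rule mdvd_add)
  moreover have "x + y \<in> Dm m" using \<open>mdvd m g (x+y)\<close> Dm_iff mdvd_mono by blast
  ultimately show ?thesis using mnorm_le_iff[OF m] mx by simp
qed

lemma mnorm_tri:
  assumes m: "m \<ge> 2" and x: "x \<in> Dm m" and y: "y \<in> Dm m"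
  shows "mnorm m (x + y) \<le> mnorm m x + mnorm m y"
  using mnorm_ultra[OF assms] mnorm_nonneg[of m x] mnorm_nonneg[of m y] by linarith



lemma dig_exists:
  assumes m: "m \<ge> 2" and x: "mdvd m 0 x"
  shows "\<exists>c<m. mdvd m 1 (x - of_nat c)"
proof -
  obtain a b where h: "b > 0" "coprime b (int m)" "x = of_int a / of_int b"
    using x unfolding mdvd_def by blast
  obtain u v where uv: "u * b + v * int m = gcd b (int m)" using bezout_int by blast
  then have uv1: "u * b + v * int m = 1" using h(2) by simp
  define c where "c = (a * u) mod int m"
  have mpos: "0 < int m" using m by simp
  have c0: "0 \<le> c" "c < int m" unfolding c_def using pos_mod_sign[OF mpos] pos_mod_bound[OF mpos] by auto
  have "a - c * b = a * (u * b + v * int m) - c * b" by (simp add: uv1)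
  also have "\<dots> = ((a*u) - c) * b + a * v * int m" by (simp add: algebra_simps)
  finally have e: "a - c * b = ((a*u) - c) * b + a * v * int m" .
  have "a*u - c = int m * (a*u div int m)" unfolding c_def by (rule minus_mod_eq_mult_div)
  then have d1: "int m dvd (a*u) - c" by (rule dvdI)
  have "int m dvd ((a*u) - c) * b" using d1 by (rule dvd_mult2)
  moreover have "int m dvd a * v * int m" by (rule dvd_triv_right)
  ultimately have dv: "int m dvd a - c * b" unfolding e by (rule dvd_add)
  have b0: "(of_int b :: rat) \<noteq> 0" using h by simp
  have oc: "of_nat (nat c) = (of_int c :: rat)" using c0 by simp
  have "x - of_nat (nat c) = of_int a / of_int b - of_int c" by (simp only: h(3) oc)
  also have "\<dots> = (of_int a - of_int c * of_int b) / (of_int b :: rat)"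
    using b0 by (simp add: diff_divide_distrib)
  also have "\<dots> = of_int (a - c * b) / of_int b" by simp
  finally have eq: "x - of_nat (nat c) = of_int (a - c * b) / of_int b" .
  have "mdvd m 1 (x - of_nat (nat c))" unfolding mdvd_def
    apply (rule exI[of _ "a - c*b"], rule exI[of _ b]) using h(1) h(2) dv eq by simp
  moreover have "nat c < m" using c0 by simp
  ultimately show ?thesis by blast
qed

definition dig :: "nat \<Rightarrow> rat \<Rightarrow> nat" where
  "dig m x = (SOME c. c < m \<and> mdvd m 1 (x - of_nat c))"

definition Tm :: "nat \<Rightarrow> rat \<Rightarrow> rat" where
  "Tm m x = (x - of_nat (dig m x)) * (of_nat m + 1) / of_nat m"

lemma dig_prop:
  assumes m: "m \<ge> 2" and x: "mdvd m 0 x"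
  shows "dig m x < m" "mdvd m 1 (x - of_nat (dig m x))"
  using someI_ex[OF dig_exists[OF assms]] unfolding dig_def by auto

lemma int_small_dvd: assumes "int m dvd d" "\<bar>d\<bar> < int m" shows "d = 0"
proof (rule ccontr)
  assume "d \<noteq> 0"
  then have "\<bar>int m\<bar> \<le> \<bar>d\<bar>" using dvd_imp_le_int assms(1) by blast
  then show False using assms(2) by linarith
qed

lemma dig_unique:
  assumes m: "m \<ge> 2" and "c < m" "c' < m" "mdvd m 1 (x - of_nat c)" "mdvd m 1 (x - of_nat c')"
  shows "c = c'"
proof -
  have "mdvd m 1 ((x - of_nat c') - (x - of_nat c))" using assms mdvd_diff by blast
  moreover have "(x - of_nat c') - (x - of_nat c) = (of_int (int c - int c') :: rat)" by simp
  ultimately have "mdvd m 1 (of_int (int c - int c'))" by simp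
  then have "int m dvd int c - int c'" using mdvd_int_iff[of m 1 "int c - int c'"] by simp
  moreover have "\<bar>int c - int c'\<bar> < int m" using assms by linarith
  ultimately have "int c - int c' = 0" by (rule int_small_dvd)
  then show ?thesis by simp
qed

lemma Tm_mdvd: assumes m: "m \<ge> 2" and x: "mdvd m 0 x" shows "mdvd m 0 (Tm m x)"
proof -
  have "mdvd m (Suc 0) (x - of_nat (dig m x))" using dig_prop(2)[OF m x] by simp
  then have "mdvd m 0 ((x - of_nat (dig m x)) / of_nat m)" using mdvd_div_m[OF m] by blast
  moreover have "(of_nat m + 1 :: rat) = of_nat (m+1)" by simp
  then have "mdvd m 0 (of_nat m + 1)" using mdvd_nat[of m "m+1"] by metis
  ultimately have "mdvd m (0+0) ((x - of_nat (dig m x)) / of_nat m * (of_nat m + 1))" by (rule mdvd_mult)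
  then show ?thesis unfolding Tm_def by simp
qed

lemma cancel_aux: "(A::rat) \<noteq> 0 \<Longrightarrow> A + 1 \<noteq> 0 \<Longrightarrow> A / (A + 1) * (z * (A + 1) / A) = z"
  by simp

lemma Tm_eq: assumes m: "m \<ge> 2" shows "y = of_nat (dig m y) + (of_nat m / (of_nat m + 1)) * Tm m y"
proof -
  have "(of_nat m + 1 :: rat) = of_nat (Suc m)" by simp
  then have n1: "(of_nat m + 1 :: rat) \<noteq> 0" by (simp only: of_nat_eq_0_iff)
  have n0: "(of_nat m :: rat) \<noteq> 0" using m by simp
  have "(of_nat m / (of_nat m + 1)) * Tm m y = y - of_nat (dig m y)"
    unfolding Tm_def by (rule cancel_aux[OF n0 n1])
  then show ?thesis by simp
qed

lemma Tm_iter_mdvd: "m \<ge> 2 \<Longrightarrow> mdvd m 0 x \<Longrightarrow> mdvd m 0 ((Tm m ^^ i) x)"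
  by (induct i) (auto intro: Tm_mdvd)

lemma expansion_gen:
  fixes r :: rat
  assumes e: "\<And>y. y = dg y + r * T y"
  shows "x = (\<Sum>i<n. r^i * dg ((T ^^ i) x)) + r^n * (T ^^ n) x"
proof (induct n)
  case 0 then show ?case by simp
next
  case (Suc n)
  have "(T ^^ n) x = dg ((T ^^ n) x) + r * (T ^^ Suc n) x"
    using e[of "(T ^^ n) x"] by simp
  then have "r^n * (T ^^ n) x = r^n * (dg ((T ^^ n) x) + r * (T ^^ Suc n) x)"
    by (rule arg_cong[where f="\<lambda>z. r^n*z"])
  also have "\<dots> = r^n * dg ((T ^^ n) x) + r^Suc n * (T ^^ Suc n) x"
    by (simp add: algebra_simps)
  finally have "r^n * (T ^^ n) x = r^n * dg ((T ^^ n) x) + r^Suc n * (T ^^ Suc n) x" .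
  then show ?case using Suc by simp
qed

lemma expansion:
  assumes m: "m \<ge> 2"
  shows "x = (\<Sum>i<n. (of_nat m / (of_nat m + 1))^i * of_nat (dig m ((Tm m ^^ i) x)))
             + (of_nat m / (of_nat m + 1))^n * (Tm m ^^ n) x"
  by (rule expansion_gen[where dg="\<lambda>y. of_nat (dig m y)"]) (rule Tm_eq[OF m])

lemma stability:
  assumes m: "m \<ge> 2"
  shows "mdvd m 0 x \<Longrightarrow> mdvd m 0 y \<Longrightarrow> mdvd m n (x - y) \<Longrightarrow> i < n \<Longrightarrow>
    dig m ((Tm m ^^ i) x) = dig m ((Tm m ^^ i) y)"
proof (induct i arbitrary: x y n)
  case 0
  have "mdvd m 1 (x - y)" using 0 mdvd_mono by fastforce
  have "mdvd m 1 (x - of_nat (dig m y))"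
    using mdvd_add[OF \<open>mdvd m 1 (x - y)\<close> dig_prop(2)[OF m \<open>mdvd m 0 y\<close>]] by simp
  then show ?case using dig_unique[OF m dig_prop(1)[OF m \<open>mdvd m 0 x\<close>] dig_prop(1)[OF m \<open>mdvd m 0 y\<close>]
     dig_prop(2)[OF m \<open>mdvd m 0 x\<close>]] by simp
next
  case (Suc i)
  obtain n' where n': "n = Suc n'" using Suc.prems(4) by (cases n) auto
  have d: "dig m x = dig m y"
  proof -
    have "mdvd m 1 (x - y)" using Suc.prems mdvd_mono by fastforce
    have "mdvd m 1 (x - of_nat (dig m y))"
      using mdvd_add[OF \<open>mdvd m 1 (x - y)\<close> dig_prop(2)[OF m \<open>mdvd m 0 y\<close>]] by simp
    then show ?thesis using dig_unique[OF m dig_prop(1)[OF m \<open>mdvd m 0 x\<close>] dig_prop(1)[OF m \<open>mdvd m 0 y\<close>]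
       dig_prop(2)[OF m \<open>mdvd m 0 x\<close>]] by simp
  qed
  have "Tm m x - Tm m y = ((x - of_nat (dig m y)) - (y - of_nat (dig m y))) * (of_nat m + 1) / of_nat m"
    unfolding Tm_def using d by (simp only: diff_divide_distrib left_diff_distrib)
  then have "Tm m x - Tm m y = (x - y) / of_nat m * (of_nat m + 1)" by simp
  moreover have "mdvd m n' ((x - y) / of_nat m * (of_nat m + 1))"
    using mdvd_mult[OF mdvd_div_m[OF m, of n' "x - y"] mdvd_nat[of m "m+1"]] Suc.prems(3) n' by (simp add: add.commute)
  ultimately have "mdvd m n' (Tm m x - Tm m y)" by simp
  then have "dig m ((Tm m ^^ i) (Tm m x)) = dig m ((Tm m ^^ i) (Tm m y))"
    using Suc.hyps[OF Tm_mdvd[OF m Suc.prems(1)] Tm_mdvd[OF m Suc.prems(2)]] Suc.prems(4) n' by simp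
  then show ?case by (simp add: funpow_Suc_right del: funpow.simps)
qed



lemma Dm_diff: "x \<in> Dm m \<Longrightarrow> y \<in> Dm m \<Longrightarrow> x - y \<in> Dm m"
  using Dm_iff mdvd_diff by blast

lemma Dm_add: "x \<in> Dm m \<Longrightarrow> y \<in> Dm m \<Longrightarrow> x + y \<in> Dm m"
  using Dm_iff mdvd_add by blast

lemma mnorm_sym: "mnorm m (a - b) = mnorm m (b - a)"
  using mnorm_neg[of m "a - b"] by simp

lemma abs_mnorm_diff:
  assumes m: "m \<ge> 2" and x: "x \<in> Dm m" and y: "y \<in> Dm m"
  shows "\<bar>mnorm m x - mnorm m y\<bar> \<le> mnorm m (x - y)"
proof -
  have "mnorm m x \<le> mnorm m y + mnorm m (x - y)"
    using mnorm_tri[OF m y Dm_diff[OF x y]] by simp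
  moreover have "mnorm m y \<le> mnorm m x + mnorm m (y - x)"
    using mnorm_tri[OF m x Dm_diff[OF y x]] by simp
  ultimately show ?thesis using mnorm_sym[of m x y] by linarith
qed

lemma mnorm_ultra_diff:
  assumes m: "m \<ge> 2" and "a \<in> Dm m" "b \<in> Dm m" "c \<in> Dm m"
  shows "mnorm m (a - c) \<le> max (mnorm m (a - b)) (mnorm m (b - c))"
  using mnorm_ultra[OF m Dm_diff[OF assms(2,3)] Dm_diff[OF assms(3,4)]] by simp

lemma mcauchy_Dm: "mcauchy m A \<Longrightarrow> A j \<in> Dm m"
  unfolding mcauchy_def by blast

lemma conv_dist:
  assumes m: "m \<ge> 2" and A: "mcauchy m A" and B: "mcauchy m B"
  shows "convergent (\<lambda>j. mnorm m (A j - B j))"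
proof -
  have "Cauchy (\<lambda>j. mnorm m (A j - B j))"
  proof (rule CauchyI)
    fix e :: real assume e: "0 < e"
    obtain N1 where N1: "\<forall>i\<ge>N1. \<forall>j\<ge>N1. mnorm m (A i - A j) < e/2"
      using A e unfolding mcauchy_def by (meson half_gt_zero)
    obtain N2 where N2: "\<forall>i\<ge>N2. \<forall>j\<ge>N2. mnorm m (B i - B j) < e/2"
      using B e unfolding mcauchy_def by (meson half_gt_zero)
    show "\<exists>M. \<forall>i\<ge>M. \<forall>j\<ge>M. norm (mnorm m (A i - B i) - mnorm m (A j - B j)) < e"
    proof (intro exI allI impI)
      fix i j assume i: "max N1 N2 \<le> i" and j: "max N1 N2 \<le> j"
      have D: "\<And>k. A k \<in> Dm m" "\<And>k. B k \<in> Dm m" using A B mcauchy_Dm by blast+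
      have "\<bar>mnorm m (A i - B i) - mnorm m (A j - B j)\<bar> \<le> mnorm m ((A i - B i) - (A j - B j))"
        using abs_mnorm_diff[OF m Dm_diff[OF D(1) D(2)] Dm_diff[OF D(1) D(2)]] by blast
      also have "(A i - B i) - (A j - B j) = (A i - A j) + (B j - B i)" by simp
      also have "mnorm m \<dots> \<le> mnorm m (A i - A j) + mnorm m (B j - B i)"
        by (rule mnorm_tri[OF m Dm_diff[OF D(1) D(1)] Dm_diff[OF D(2) D(2)]])
      also have "\<dots> < e/2 + e/2" using N1 N2 i j by (intro add_strict_mono) auto
      finally show "norm (mnorm m (A i - B i) - mnorm m (A j - B j)) < e" by simp
    qed
  qed
  then show ?thesis by (simp add: Cauchy_convergent_iff)
qed

lemma mcauchy_const: "c \<in> Dm m \<Longrightarrow> mcauchy m (\<lambda>_. c)"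
  unfolding mcauchy_def by simp

lemma some_Qm_of:
  assumes "c \<in> Dm m"
  shows "mcauchy m (SOME X. X \<in> Qm_of m c)"
    "(\<lambda>j. mnorm m (c - (SOME X. X \<in> Qm_of m c) j)) \<longlonglongrightarrow> 0"
proof -
  have "(\<lambda>_. c) \<in> Qm_of m c" unfolding Qm_of_def Qm_class_def using mcauchy_const[OF assms] by simp
  then have "(SOME X. X \<in> Qm_of m c) \<in> Qm_of m c" by (rule someI[of "\<lambda>X. X \<in> Qm_of m c"])
  then show "mcauchy m (SOME X. X \<in> Qm_of m c)"
    "(\<lambda>j. mnorm m (c - (SOME X. X \<in> Qm_of m c) j)) \<longlonglongrightarrow> 0"
    unfolding Qm_of_def Qm_class_def by auto
qed

lemma some_Qm:
  assumes "q \<in> Qm m"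
  shows "mcauchy m (SOME Y. Y \<in> q)"
proof -
  obtain X where X: "mcauchy m X" "q = Qm_class m X" using assms unfolding Qm_def by blast
  have "X \<in> q" using X unfolding Qm_class_def by simp
  then have "(SOME Y. Y \<in> q) \<in> q" by (rule someI[of "\<lambda>Y. Y \<in> q"])
  then show ?thesis using X(2) unfolding Qm_class_def by auto
qed

lemma Qm_dist_conv:
  assumes m: "m \<ge> 2" and c: "c \<in> Dm m" and q: "q \<in> Qm m"
  shows "(\<lambda>j. mnorm m ((SOME X. X \<in> Qm_of m c) j - (SOME Y. Y \<in> q) j)) \<longlonglongrightarrow> Qm_dist m (Qm_of m c) q"
  using conv_dist[OF m some_Qm_of(1)[OF c] some_Qm[OF q]] unfolding Qm_dist_def
  by (simp add: convergent_LIMSEQ_iff)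

lemma Qm_dist_nonneg:
  assumes m: "m \<ge> 2" and c: "c \<in> Dm m" and q: "q \<in> Qm m"
  shows "0 \<le> Qm_dist m (Qm_of m c) q"
  by (rule tendsto_lowerbound[OF Qm_dist_conv[OF assms]]) (auto simp: mnorm_nonneg)

lemma Qm_dist_le:
  assumes m: "m \<ge> 2" and c: "c \<in> Dm m" and q: "q \<in> Qm m"
    and ev: "eventually (\<lambda>j. mnorm m (c - (SOME Y. Y \<in> q) j) \<le> 1 / real m ^ k) sequentially"
  shows "Qm_dist m (Qm_of m c) q \<le> 1 / real m ^ k"
proof (rule tendsto_upperbound[OF Qm_dist_conv[OF assms(1-3)]])
  let ?Z = "SOME X. X \<in> Qm_of m c" and ?Y = "SOME Y. Y \<in> q"
  have pos: "0 < 1 / real m ^ k" using m by simp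
  have "eventually (\<lambda>j. mnorm m (c - ?Z j) < 1 / real m ^ k) sequentially"
    using some_Qm_of(2)[OF c] pos by (rule order_tendstoD)
  then show "eventually (\<lambda>j. mnorm m (?Z j - ?Y j) \<le> 1 / real m ^ k) sequentially"
    using ev
  proof eventually_elim
    case (elim j)
    have "mnorm m (?Z j - ?Y j) \<le> max (mnorm m (?Z j - c)) (mnorm m (c - ?Y j))"
      by (rule mnorm_ultra_diff[OF m mcauchy_Dm[OF some_Qm_of(1)[OF c]] c mcauchy_Dm[OF some_Qm[OF q]]])
    then show ?case using elim mnorm_sym[of m "?Z j" c] by simp
  qed
qed simp

lemma mnorm_le_dists:
  assumes m: "m \<ge> 2" and c: "c \<in> Dm m" and d: "d \<in> Dm m" and q: "q \<in> Qm m"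
  shows "mnorm m (c - d) \<le> max (Qm_dist m (Qm_of m c) q) (Qm_dist m (Qm_of m d) q)"
proof -
  let ?Z = "SOME X. X \<in> Qm_of m c" and ?W = "SOME X. X \<in> Qm_of m d" and ?Y = "SOME Y. Y \<in> q"
  have Z: "\<And>j. ?Z j \<in> Dm m" using mcauchy_Dm[OF some_Qm_of(1)[OF c]] .
  have W: "\<And>j. ?W j \<in> Dm m" using mcauchy_Dm[OF some_Qm_of(1)[OF d]] .
  have Y: "\<And>j. ?Y j \<in> Dm m" using mcauchy_Dm[OF some_Qm[OF q]] .
  define f where "f = (\<lambda>j. max (max (mnorm m (c - ?Z j)) (mnorm m (?Z j - ?Y j)))
                             (max (mnorm m (?W j - ?Y j)) (mnorm m (d - ?W j))))"
  have lim: "f \<longlonglongrightarrow> max (max 0 (Qm_dist m (Qm_of m c) q)) (max (Qm_dist m (Qm_of m d) q) 0)"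
    unfolding f_def
    by (intro tendsto_max some_Qm_of(2)[OF c] some_Qm_of(2)[OF d] Qm_dist_conv[OF m c q] Qm_dist_conv[OF m d q])
  have "\<And>j. mnorm m (c - d) \<le> f j"
  proof -
    fix j
    have "mnorm m (c - d) \<le> max (mnorm m (c - ?Y j)) (mnorm m (?Y j - d))"
      by (rule mnorm_ultra_diff[OF m c Y d])
    moreover have "mnorm m (c - ?Y j) \<le> max (mnorm m (c - ?Z j)) (mnorm m (?Z j - ?Y j))"
      by (rule mnorm_ultra_diff[OF m c Z Y])
    moreover have "mnorm m (?Y j - d) \<le> max (mnorm m (?Y j - ?W j)) (mnorm m (?W j - d))"
      by (rule mnorm_ultra_diff[OF m Y W d])
    ultimately show "mnorm m (c - d) \<le> f j" unfolding f_def
      using mnorm_sym[of m "?Y j" "?W j"] mnorm_sym[of m "?W j" d] by (simp add: max_def split: if_splits)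
  qed
  then have "mnorm m (c - d) \<le> max (max 0 (Qm_dist m (Qm_of m c) q)) (max (Qm_dist m (Qm_of m d) q) 0)"
    by (intro tendsto_lowerbound[OF lim]) auto
  then show ?thesis using Qm_dist_nonneg[OF m c q] Qm_dist_nonneg[OF m d q] by simp
qed



abbreviation rr :: "nat \<Rightarrow> rat" where "rr m \<equiv> of_nat m / (of_nat m + 1)"

lemma psum_mdvd: "mdvd m 0 (\<Sum>k<n. (rr m) ^ k * of_nat (s k))"
  by (rule mdvd_sum) (auto intro!: mdvd_mult[of m 0 _ 0, simplified] mdvd_nat mdvd_mono[OF mdvd_rpow])

lemma psum_Dm: "(\<Sum>k<n. (rr m) ^ k * of_nat (s k)) \<in> Dm m"
  using psum_mdvd Dm_iff by blast

lemma inv_pow_lim: "m \<ge> 2 \<Longrightarrow> (\<lambda>n. 1 / real m ^ n) \<longlonglongrightarrow> 0"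
proof -
  assume m: "m \<ge> 2"
  have "(\<lambda>n. (1 / real m) ^ n) \<longlonglongrightarrow> 0" using m by (intro LIMSEQ_power_zero) simp
  then show ?thesis by (simp add: power_one_over)
qed

lemma nondiv:
  assumes m: "m \<ge> 2" and s: "\<forall>k. s k < m" and t: "\<forall>k. t k < m"
    and eq: "\<forall>i<k. s i = t i" and ne: "s k \<noteq> t k" and n: "k < n"
  shows "\<not> mdvd m (Suc k) ((\<Sum>i<n. (rr m) ^ i * of_nat (s i)) - (\<Sum>i<n. (rr m) ^ i * of_nat (t i)))"
proof
  assume H: "mdvd m (Suc k) ((\<Sum>i<n. (rr m) ^ i * of_nat (s i)) - (\<Sum>i<n. (rr m) ^ i * of_nat (t i)))"
  define g where "g = (\<lambda>i. (rr m) ^ i * (of_nat (s i) - of_nat (t i)))"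
  have "(\<Sum>i<n. (rr m) ^ i * of_nat (s i)) - (\<Sum>i<n. (rr m) ^ i * of_nat (t i)) = (\<Sum>i<n. g i)"
    unfolding g_def by (simp add: sum_subtractf right_diff_distrib)
  also have "\<dots> = (\<Sum>i\<in>{0..<Suc k}. g i) + (\<Sum>i\<in>{Suc k..<n}. g i)"
    using n sum.atLeastLessThan_concat[of 0 "Suc k" n g] by (simp add: atLeast0LessThan[symmetric] del: sum.op_ivl_Suc)
  also have "(\<Sum>i\<in>{0..<Suc k}. g i) = g k"
  proof -
    have "(\<Sum>i\<in>{0..<k}. g i) = 0" using eq unfolding g_def by (intro sum.neutral) auto
    then show ?thesis by simp
  qed
  finally have split: "(\<Sum>i<n. (rr m) ^ i * of_nat (s i)) - (\<Sum>i<n. (rr m) ^ i * of_nat (t i))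
     = g k + (\<Sum>i\<in>{Suc k..<n}. g i)" .
  have tail: "mdvd m (Suc k) (\<Sum>i\<in>{Suc k..<n}. g i)"
  proof (rule mdvd_sum)
    fix i assume "i \<in> {Suc k..<n}"
    then have "Suc k \<le> i" by simp
    have "mdvd m (i + 0) ((rr m) ^ i * (of_nat (s i) - of_nat (t i)))"
      by (rule mdvd_mult[OF mdvd_rpow mdvd_diff[OF mdvd_nat mdvd_nat]])
    then show "mdvd m (Suc k) (g i)" unfolding g_def using mdvd_mono \<open>Suc k \<le> i\<close> by simp
  qed simp
  have gk: "mdvd m (Suc k) (g k)" using mdvd_diff[OF H[unfolded split] tail] by simp
  define d where "d = int (s k) - int (t k)"
  have "(of_nat (m+1) :: rat)^k * g k = of_int ((int m)^k * d)"
  proof -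
    have n1: "(of_nat m + 1 :: rat) \<noteq> 0" by (metis of_nat_Suc of_nat_eq_0_iff add.commute nat.distinct(1))
    have aux: "\<And>A B z. (A::rat) \<noteq> 0 \<Longrightarrow> A^k * ((B/A)^k * z) = B^k * z"
      by (simp add: power_divide)
    have om: "(of_nat (m+1) :: rat) = of_nat m + 1" by simp
    have "(of_nat (m+1) :: rat)^k * g k = of_nat m ^ k * (of_nat (s k) - of_nat (t k))"
      unfolding g_def om by (rule aux[OF n1])
    then show ?thesis unfolding d_def by simp
  qed
  moreover have "mdvd m (0 + Suc k) ((of_nat (m+1) :: rat)^k * g k)"
    by (rule mdvd_mult[OF _ gk]) (metis mdvd_nat of_nat_power)
  ultimately have "mdvd m (Suc k) (of_int ((int m)^k * d))" by simp
  then have "(int m)^(Suc k) dvd (int m)^k * d" by (simp only: mdvd_int_iff)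
  then have "(int m)^k * int m dvd (int m)^k * d" by (simp only: power_Suc2)
  moreover have "(int m)^k \<noteq> 0" using m by simp
  ultimately have "int m dvd d" using dvd_times_left_cancel_iff[of "(int m)^k" "int m" d] by blast
  moreover have "\<bar>d\<bar> < int m"
  proof -
    have "int (s k) < int m" "int (t k) < int m" using s t by auto
    then show ?thesis unfolding d_def abs_less_iff by linarith
  qed
  ultimately have "d = 0" by (rule int_small_dvd)
  then show False using ne unfolding d_def by simp
qed



theorem mainTheorem11:
  fixes m :: nat and q :: "(nat \<Rightarrow> rat) set"
  assumes "m \<ge> 2" and "q \<in> Qm m"
  shows "\<exists>!s :: nat \<Rightarrow> nat. (\<forall>k. s k < m) \<and>
    (\<lambda>n. Qm_dist m (Qm_of m (\<Sum>k<n. (of_nat m / (of_nat m + 1)) ^ k * of_nat (s k))) q)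
      \<longlonglongrightarrow> 0"
proof (rule ex_ex1I)
  have m: "m \<ge> 2" and q: "q \<in> Qm m" using assms by auto
  define Y where "Y = (SOME Y. Y \<in> q)"
  have YC: "mcauchy m Y" unfolding Y_def by (rule some_Qm[OF q])
  have YD: "\<And>j. Y j \<in> Dm m" using mcauchy_Dm[OF YC] .
  have YD0: "\<And>j. mdvd m 0 (Y j)" using YD Dm_iff by blast
  have "\<forall>n. \<exists>N. \<forall>j\<ge>N. \<forall>l\<ge>N. mnorm m (Y j - Y l) < 1 / real m ^ n"
  proof
    fix n
    have "0 < 1 / real m ^ n" using m by simp
    then show "\<exists>N. \<forall>j\<ge>N. \<forall>l\<ge>N. mnorm m (Y j - Y l) < 1 / real m ^ n"
      using YC unfolding mcauchy_def by blast
  qed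
  then obtain N where N: "\<And>n j l. N n \<le> j \<Longrightarrow> N n \<le> l \<Longrightarrow> mnorm m (Y j - Y l) < 1 / real m ^ n"
    by metis
  define s where "s = (\<lambda>k. dig m ((Tm m ^^ k) (Y (N (Suc k)))))"
  have slt: "\<forall>k. s k < m" unfolding s_def using dig_prop(1)[OF m Tm_iter_mdvd[OF m YD0]] by blast
  have claim1: "\<And>i j. N (Suc i) \<le> j \<Longrightarrow> dig m ((Tm m ^^ i) (Y j)) = s i"
  proof -
    fix i j assume j: "N (Suc i) \<le> j"
    have "mnorm m (Y j - Y (N (Suc i))) \<le> 1 / real m ^ Suc i"
      using N[OF j order_refl] by simp
    then have "mdvd m (Suc i) (Y j - Y (N (Suc i)))"
      using mnorm_le_iff[OF m Dm_diff[OF YD YD]] by blast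
    then show "dig m ((Tm m ^^ i) (Y j)) = s i" unfolding s_def
      by (rule stability[OF m YD0 YD0]) simp
  qed
  let ?S = "\<lambda>s n. (\<Sum>k<n. (of_nat m / (of_nat m + 1)) ^ k * of_nat (s k)) :: rat"
  have bound: "\<And>n. Qm_dist m (Qm_of m (?S s n)) q \<le> 1 / real m ^ n"
  proof -
    fix n
    have "eventually (\<lambda>j. \<forall>i\<in>{..<n}. dig m ((Tm m ^^ i) (Y j)) = s i) sequentially"
      by (rule eventually_ball_finite) (auto intro!: eventually_sequentiallyI claim1)
    then have "eventually (\<lambda>j. mnorm m (?S s n - Y j) \<le> 1 / real m ^ n) sequentially"
    proof eventually_elim
      case (elim j)
      have "Y j = (\<Sum>i<n. (rr m)^i * of_nat (dig m ((Tm m ^^ i) (Y j)))) + (rr m)^n * (Tm m ^^ n) (Y j)"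
        by (rule expansion[OF m])
      also have "(\<Sum>i<n. (rr m)^i * of_nat (dig m ((Tm m ^^ i) (Y j)))) = ?S s n"
        using elim by (intro sum.cong) auto
      finally have "?S s n - Y j = - ((rr m)^n * (Tm m ^^ n) (Y j))" by simp
      moreover have "mdvd m (n + 0) ((rr m)^n * (Tm m ^^ n) (Y j))"
        by (rule mdvd_mult[OF mdvd_rpow Tm_iter_mdvd[OF m YD0]])
      ultimately have "mdvd m n (?S s n - Y j)" using mdvd_neg by simp
      then show ?case using mnorm_le_iff[OF m Dm_diff[OF psum_Dm YD]] by blast
    qed
    then show "Qm_dist m (Qm_of m (?S s n)) q \<le> 1 / real m ^ n"
      using Qm_dist_le[OF m psum_Dm q] unfolding Y_def by blast
  qed
  have "(\<lambda>n. Qm_dist m (Qm_of m (?S s n)) q) \<longlonglongrightarrow> 0"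
    by (rule tendsto_sandwich[OF _ _ tendsto_const inv_pow_lim[OF m]])
       (auto intro!: always_eventually Qm_dist_nonneg[OF m psum_Dm q] bound)
  then show "\<exists>s. (\<forall>k. s k < m) \<and> (\<lambda>n. Qm_dist m (Qm_of m (?S s n)) q) \<longlonglongrightarrow> 0"
    using slt by blast
next
  fix s t
  assume S: "(\<forall>k. s k < m) \<and> (\<lambda>n. Qm_dist m (Qm_of m (\<Sum>k<n. (of_nat m / (of_nat m + 1)) ^ k * of_nat (s k))) q) \<longlonglongrightarrow> 0"
     and T: "(\<forall>k. t k < m) \<and> (\<lambda>n. Qm_dist m (Qm_of m (\<Sum>k<n. (of_nat m / (of_nat m + 1)) ^ k * of_nat (t k))) q) \<longlonglongrightarrow> 0"
  have m: "m \<ge> 2" and q: "q \<in> Qm m" using assms by auto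
  show "s = t"
  proof (rule ccontr)
    assume "s \<noteq> t"
    then have ex: "\<exists>k. s k \<noteq> t k" by auto
    define k where "k = (LEAST k. s k \<noteq> t k)"
    have ne: "s k \<noteq> t k" unfolding k_def using LeastI_ex[OF ex] .
    have eq: "\<forall>i<k. s i = t i" unfolding k_def using not_less_Least by blast
    let ?S = "\<lambda>s n. (\<Sum>k<n. (of_nat m / (of_nat m + 1)) ^ k * of_nat (s k)) :: rat"
    have "(\<lambda>n. max (Qm_dist m (Qm_of m (?S s n)) q) (Qm_dist m (Qm_of m (?S t n)) q)) \<longlonglongrightarrow> max 0 0"
      using S T by (intro tendsto_max) auto
    then have lim0: "(\<lambda>n. max (Qm_dist m (Qm_of m (?S s n)) q) (Qm_dist m (Qm_of m (?S t n)) q)) \<longlonglongrightarrow> 0" by simp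
    have pos: "0 < 1 / real m ^ Suc k" using m by simp
    have "eventually (\<lambda>n. max (Qm_dist m (Qm_of m (?S s n)) q) (Qm_dist m (Qm_of m (?S t n)) q) < 1 / real m ^ Suc k) sequentially"
      using order_tendstoD(2)[OF lim0 pos] .
    then obtain N0 where N0: "\<And>n. n \<ge> N0 \<Longrightarrow> max (Qm_dist m (Qm_of m (?S s n)) q) (Qm_dist m (Qm_of m (?S t n)) q) < 1 / real m ^ Suc k"
      unfolding eventually_sequentially by blast
    define n where "n = max N0 (Suc k)"
    have "mnorm m (?S s n - ?S t n) \<le> max (Qm_dist m (Qm_of m (?S s n)) q) (Qm_dist m (Qm_of m (?S t n)) q)"
      by (rule mnorm_le_dists[OF m psum_Dm psum_Dm q])
    also have "\<dots> < 1 / real m ^ Suc k" using N0 n_def by simp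
    finally have "mnorm m (?S s n - ?S t n) \<le> 1 / real m ^ Suc k" by (rule less_imp_le)
    then have "mdvd m (Suc k) (?S s n - ?S t n)"
      using mnorm_le_iff[OF m Dm_diff[OF psum_Dm psum_Dm]] by blast
    moreover have "\<not> mdvd m (Suc k) (?S s n - ?S t n)"
      by (rule nondiv[OF m]) (use S T eq ne n_def in auto)
    ultimately show False by blast
  qed
qed

end
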